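(* Let $(G,O)$ be an equipped finite group such that the elements of $O=C_1\sqcup\dots\sqcup C_m$ generate $G$. Let $n_i=|C_i|$ and let $p_i$ be the order of the elements of $C_i$. Let $s_1\in S(G,O)$ satisfy $\tau_i(s_1)>n_ip_i$ for all $1\le i\le m$, and let $s_2=y_{a_1,b_1}\cdots y_{a_k,b_k}$ be such that $s_1\cdot s_2\in\mathbb S(G,O)^G$. Then there exists $z\in S(G,O)$ with $s_1\cdot s_2=z\cdot(y_{{\bf1},{\bf1}})^k$ in $\mathbb S(G,O)$.
   Context: Conventions: $x^y=y^{-1}xy$, $[x,y]=xyx^{-1}y^{-1}$. An equipped group: $O\subset G$, ${\bf 1}\notin O$, $O$ a union of conjugacy classes $C_1,\dots,C_m$ in fixed order. The strong covering semigroup $\mathbb S(G,O)$ is generated by $x_g$ ($g\in O$) and $y_{a,b}$ ($a,b\in G$) subject to, for all $g_1,g_2,g\in O$, $a,b\in G$: $x_{g_1}x_{g_2}=x_{g_2}x_{g_1^{g_2}}$; $x_gy_{a,b}=y_{a,b}x_{g^{[a,b]}}$; $x_gy_{a,b}=x_{g^{c_1}}y_{ga,b}$, $c_1=ab^{-1}a^{-1}g^{-1}$; $y_{a,b}x_g=y_{a,g^{-1}b}x_{g^{c_2}}$, $c_2=ba^{-1}b^{-1}g$; $x_gy_{a,b}=x_{g^{[a,b]}}y_{a^{g^{[a,b]}},b^{g^{[a,b]}}}$. $S(G,O)$ is its subsemigroup generated by the $x_g$. For $s$ represented by a word, $\tau_i(s)$ is the number of letters $x_g$ with $g\in C_i$,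 and $G_s$ is the subgroup of $G$ generated by all $g$ and all $a,b$ indexing the letters (both independent of the word); $\mathbb S(G,O)^G=\{s:G_s=G\}$. *)

theory Defs
  imports "HOL-Algebra.Algebra"
begin

text \<open>Conventions: x^y = y^-1 x y, [x,y] = x y x^-1 y^-1.\<close>

definition gconj :: "'a monoid \<Rightarrow> 'a \<Rightarrow> 'a \<Rightarrow> 'a" where
  "gconj G x y = inv\<^bsub>G\<^esub> y \<otimes>\<^bsub>G\<^esub> x \<otimes>\<^bsub>G\<^esub> y"

definition gcomm :: "'a monoid \<Rightarrow> 'a \<Rightarrow> 'a \<Rightarrow> 'a" where
  "gcomm G x y = x \<otimes>\<^bsub>G\<^esub> y \<otimes>\<^bsub>G\<^esub> inv\<^bsub>G\<^esub> x \<otimes>\<^bsub>G\<^esub> inv\<^bsub>G\<^esub> y"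

definition conj_class :: "'a monoid \<Rightarrow> 'a \<Rightarrow> 'a set" where
  "conj_class G g = {gconj G g h | h. h \<in> carrier G}"

definition equipped :: "'a monoid \<Rightarrow> 'a set list \<Rightarrow> bool" where
  "equipped G Cs \<longleftrightarrow> group G \<and> distinct Cs
     \<and> (\<forall>C\<in>set Cs. \<exists>g\<in>carrier G. C = conj_class G g)
     \<and> \<one>\<^bsub>G\<^esub> \<notin> \<Union>(set Cs)"

text \<open>Letters of the strong covering semigroup: LX g = x_g and LY a b = y_{a,b}.\<close>
datatype 'a letter = LX 'a | LY 'a 'a

definition valid_letter :: "'a monoid \<Rightarrow> 'a set \<Rightarrow> 'a letter \<Rightarrow> bool" where
  "valid_letter G Os l = (case l of LX g \<Rightarrow> g \<in> Os | LY a b \<Rightarrow> a \<in> carrier G \<and> b \<in> carrier G)"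

definition valid_word :: "'a monoid \<Rightarrow> 'a set \<Rightarrow> 'a letter list \<Rightarrow> bool" where
  "valid_word G Os w \<longleftrightarrow> (\<forall>l\<in>set w. valid_letter G Os l)"

inductive base_rel :: "'a monoid \<Rightarrow> 'a set \<Rightarrow> 'a letter list \<Rightarrow> 'a letter list \<Rightarrow> bool"
  for G Os where
  r1: "g1 \<in> Os \<Longrightarrow> g2 \<in> Os \<Longrightarrow> base_rel G Os [LX g1, LX g2] [LX g2, LX (gconj G g1 g2)]"
| r2: "g \<in> Os \<Longrightarrow> a \<in> carrier G \<Longrightarrow> b \<in> carrier G \<Longrightarrow>
       base_rel G Os [LX g, LY a b] [LY a b, LX (gconj G g (gcomm G a b))]"
| r3: "g \<in> Os \<Longrightarrow> a \<in> carrier G \<Longrightarrow> b \<in> carrier G \<Longrightarrow>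
       base_rel G Os [LX g, LY a b]
         [LX (gconj G g (a \<otimes>\<^bsub>G\<^esub> inv\<^bsub>G\<^esub> b \<otimes>\<^bsub>G\<^esub> inv\<^bsub>G\<^esub> a \<otimes>\<^bsub>G\<^esub> inv\<^bsub>G\<^esub> g)),
          LY (g \<otimes>\<^bsub>G\<^esub> a) b]"
| r4: "g \<in> Os \<Longrightarrow> a \<in> carrier G \<Longrightarrow> b \<in> carrier G \<Longrightarrow>
       base_rel G Os [LY a b, LX g]
         [LY a (inv\<^bsub>G\<^esub> g \<otimes>\<^bsub>G\<^esub> b),
          LX (gconj G g (b \<otimes>\<^bsub>G\<^esub> inv\<^bsub>G\<^esub> a \<otimes>\<^bsub>G\<^esub> inv\<^bsub>G\<^esub> b \<otimes>\<^bsub>G\<^esub> g))]"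
| r5: "g \<in> Os \<Longrightarrow> a \<in> carrier G \<Longrightarrow> b \<in> carrier G \<Longrightarrow>
       base_rel G Os [LX g, LY a b]
         [LX (gconj G g (gcomm G a b)),
          LY (gconj G a (gconj G g (gcomm G a b))) (gconj G b (gconj G g (gcomm G a b)))]"

inductive sgeq :: "'a monoid \<Rightarrow> 'a set \<Rightarrow> 'a letter list \<Rightarrow> 'a letter list \<Rightarrow> bool"
  for G Os where
  refl: "sgeq G Os w w"
| base: "base_rel G Os u v \<Longrightarrow> valid_word G Os p \<Longrightarrow> valid_word G Os q \<Longrightarrow>
         sgeq G Os (p @ u @ q) (p @ v @ q)"
| sym: "sgeq G Os u v \<Longrightarrow> sgeq G Os v u"
| trans: "sgeq G Os u v \<Longrightarrow> sgeq G Os v w \<Longrightarrow> sgeq G Os u w"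

definition is_x_word :: "'a letter list \<Rightarrow> bool" where
  "is_x_word w \<longleftrightarrow> (\<forall>l\<in>set w. \<exists>g. l = LX g)"

definition tau :: "'a set \<Rightarrow> 'a letter list \<Rightarrow> nat" where
  "tau C w = length (filter (\<lambda>l. \<exists>g\<in>C. l = LX g) w)"

fun letter_elems :: "'a letter \<Rightarrow> 'a set" where
  "letter_elems (LX g) = {g}"
| "letter_elems (LY a b) = {a, b}"

definition G_sub :: "'a monoid \<Rightarrow> 'a letter list \<Rightarrow> 'a set" where
  "G_sub G w = generate G (\<Union>l\<in>set w. letter_elems l)"

end

theory Submission
  imports Defs
begin


locale eqctx = group G for G :: "'a monoid" (structure) +
  fixes Cs :: "'a set list"
  assumes eqp: "equipped G Cs" and fin: "finite (carrier G)"
    and gen: "generate G (\<Union>(set Cs)) = carrier G"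
begin

abbreviation "Os \<equiv> \<Union>(set Cs)"
declare Union_iff[simp del]
abbreviation "sq \<equiv> sgeq G Os"
abbreviation "vw \<equiv> valid_word G Os"

lemma cancel1[simp]: "x \<in> carrier G \<Longrightarrow> y \<in> carrier G \<Longrightarrow> x \<otimes> (inv x \<otimes> y) = y"
  by (simp add: m_assoc[symmetric])
lemma cancel2[simp]: "x \<in> carrier G \<Longrightarrow> y \<in> carrier G \<Longrightarrow> inv x \<otimes> (x \<otimes> y) = y"
  by (simp add: m_assoc[symmetric])
lemmas gsimp = m_assoc inv_mult_group gconj_def gcomm_def

lemma gconj_closed[simp]: "k \<in> carrier G \<Longrightarrow> t \<in> carrier G \<Longrightarrow> gconj G k t \<in> carrier G"
  by (simp add: gconj_def)
lemma gcomm_closed[simp]: "a \<in> carrier G \<Longrightarrow> b \<in> carrier G \<Longrightarrow> gcomm G a b \<in> carrier G"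
  by (simp add: gcomm_def)
lemma gconj_one[simp]: "k \<in> carrier G \<Longrightarrow> gconj G k \<one> = k"
  by (simp add: gconj_def)
lemma gcomm_one1[simp]: "c \<in> carrier G \<Longrightarrow> gcomm G \<one> c = \<one>"
  by (simp add: gcomm_def)
lemma gconj_gconj: "k \<in> carrier G \<Longrightarrow> s \<in> carrier G \<Longrightarrow> t \<in> carrier G \<Longrightarrow>
  gconj G (gconj G k s) t = gconj G k (s \<otimes> t)"
  by (simp add: gsimp)
lemma gconj_inv_cancel[simp]: "k \<in> carrier G \<Longrightarrow> t \<in> carrier G \<Longrightarrow> gconj G (gconj G k (inv t)) t = k"
  by (simp add: gsimp)
lemma gconj_inv_cancel2[simp]: "k \<in> carrier G \<Longrightarrow> t \<in> carrier G \<Longrightarrow> gconj G (gconj G k t) (inv t) = k"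
  by (simp add: gsimp)
lemma gconj_pow: "k \<in> carrier G \<Longrightarrow> t \<in> carrier G \<Longrightarrow> (gconj G k t) [^] (n::nat) = gconj G (k [^] n) t"
proof (induction n)
  case 0 then show ?case by (simp add: gsimp)
next
  case (Suc n) then show ?case by (simp add: gsimp)
qed
lemma gconj_pow1: "k \<in> carrier G \<Longrightarrow> t \<in> carrier G \<Longrightarrow> k [^] (n::nat) = \<one> \<Longrightarrow> (gconj G k t) [^] n = \<one>"
proof -
  assume a: "k \<in> carrier G" "t \<in> carrier G" "k [^] (n::nat) = \<one>"
  have "(gconj G k t) [^] n = gconj G (k [^] n) t" by (rule gconj_pow) (use a in auto)
  then show ?thesis using a by (simp add: gconj_def)
qed

lemma pow_comm1: "x \<in> carrier G \<Longrightarrow> x [^] (j::nat) \<otimes> x = x \<otimes> x [^] j"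
  by (simp add: nat_pow_Suc2[symmetric])
lemma inv_pow_comm: assumes "x \<in> carrier G" "y \<in> carrier G"
  shows "inv (x [^] (j::nat)) \<otimes> (inv x \<otimes> y) = inv x \<otimes> (inv (x [^] j) \<otimes> y)"
proof -
  have "inv (x [^] j) \<otimes> inv x = inv x \<otimes> inv (x [^] j)"
    using assms pow_comm1[of x j] by (simp add: inv_mult_group[symmetric])
  then show ?thesis using assms by (simp add: m_assoc[symmetric])
qed
lemma G5: "g \<in> carrier G \<Longrightarrow> a \<in> carrier G \<Longrightarrow> b \<in> carrier G \<Longrightarrow>
  gconj G (gconj G g (a \<otimes> inv b \<otimes> inv a \<otimes> inv g)) (gcomm G (g \<otimes> a) b) = gconj G g (inv b)"
  by (simp add: gsimp)
lemma G6: "g \<in> carrier G \<Longrightarrow> a \<in> carrier G \<Longrightarrow> b \<in> carrier G \<Longrightarrow>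
  gconj G (gconj G g (inv a)) (gcomm G a (inv g \<otimes> b)) = gconj G g (b \<otimes> inv a \<otimes> inv b \<otimes> g)"
  by (simp add: gsimp)
lemma G9: "g \<in> carrier G \<Longrightarrow> b \<in> carrier G \<Longrightarrow> gconj G g (b \<otimes> inv \<one> \<otimes> inv b \<otimes> g) = g"
  by (simp add: gsimp)

lemma Cs_class: "C \<in> set Cs \<Longrightarrow> \<exists>g\<in>carrier G. C = conj_class G g"
  using eqp by (auto simp: equipped_def)
lemma class_sub: "C \<in> set Cs \<Longrightarrow> C \<subseteq> carrier G"
  using Cs_class[of C] by (auto simp: conj_class_def)
lemma Os_sub: "Os \<subseteq> carrier G" using class_sub by blast
lemma Os_carrier[simp]: "k \<in> Os \<Longrightarrow> k \<in> carrier G" using Os_sub by blast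
lemma one_notin: "\<one> \<notin> Os" using eqp by (auto simp: equipped_def)
lemma class_conj: assumes "C \<in> set Cs" "k \<in> carrier G" "t \<in> carrier G"
  shows "gconj G k t \<in> C \<longleftrightarrow> k \<in> C"
proof -
  obtain g where g: "g \<in> carrier G" "C = conj_class G g" using Cs_class assms(1) by blast
  have A: "x \<in> C \<Longrightarrow> s \<in> carrier G \<Longrightarrow> gconj G x s \<in> C" for x s
  proof -
    assume "x \<in> C" "s \<in> carrier G"
    then obtain h where h: "h \<in> carrier G" "x = gconj G g h" using g by (auto simp: conj_class_def)
    then have "gconj G x s = gconj G g (h \<otimes> s)" using g \<open>s\<in>carrier G\<close> by (simp add: gconj_gconj)
    then show ?thesis using g h \<open>s\<in>carrier G\<close> by (auto simp: conj_class_def)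
  qed
  show ?thesis using A[of k t] A[of "gconj G k t" "inv t"] assms by auto
qed
lemma Os_conj[simp]: "k \<in> carrier G \<Longrightarrow> t \<in> carrier G \<Longrightarrow> gconj G k t \<in> Os \<longleftrightarrow> k \<in> Os"
  using class_conj by blast
lemma class_conj_ex: assumes "C \<in> set Cs" "g \<in> C" "h \<in> C" shows "\<exists>t\<in>carrier G. h = gconj G g t"
proof -
  obtain g0 where g: "g0 \<in> carrier G" "C = conj_class G g0" using Cs_class assms(1) by blast
  obtain s1 s2 where s: "s1 \<in> carrier G" "s2 \<in> carrier G" "g = gconj G g0 s1" "h = gconj G g0 s2"
    using assms g by (auto simp: conj_class_def)
  have "gconj G g (inv s1 \<otimes> s2) = h" using s g by (simp add: gsimp)
  then show ?thesis using s by (metis inv_closed m_closed)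
qed

lemma vw_simps[simp]: "vw [] " "vw (l # w) \<longleftrightarrow> valid_letter G Os l \<and> vw w"
  "vw (u @ v) \<longleftrightarrow> vw u \<and> vw v"
  by (auto simp: valid_word_def)
lemma vw_rep[simp]: "vw (replicate n l) \<longleftrightarrow> n = 0 \<or> valid_letter G Os l"
  by (auto simp: valid_word_def)
lemma vl_simps[simp]: "valid_letter G Os (LX g) \<longleftrightarrow> g \<in> Os"
  "valid_letter G Os (LY a b) \<longleftrightarrow> a \<in> carrier G \<and> b \<in> carrier G"
  by (auto simp: valid_letter_def)

lemma sq_refl[simp]: "sq w w" by (rule sgeq.refl)
lemma sq_sym: "sq u v \<Longrightarrow> sq v u" by (rule sgeq.sym)
lemma sq_trans[trans]: "sq u v \<Longrightarrow> sq v w \<Longrightarrow> sq u w" by (rule sgeq.trans)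
lemma sq_cong: "sq u v \<Longrightarrow> vw p \<Longrightarrow> vw q \<Longrightarrow> sq (p @ u @ q) (p @ v @ q)"
proof (induction rule: sgeq.induct)
  case (base u v p' q')
  have "sq ((p @ p') @ u @ (q' @ q)) ((p @ p') @ v @ (q' @ q))"
    by (rule sgeq.base) (use base in auto)
  then show ?case by simp
next
  case (sym u v) then show ?case by (simp add: sq_sym)
next
  case (trans u v w) then show ?case by (meson sq_trans)
qed simp
lemma sq_congL: "sq u v \<Longrightarrow> vw p \<Longrightarrow> sq (p @ u) (p @ v)"
  using sq_cong[of u v p "[]"] by simp
lemma sq_congR: "sq u v \<Longrightarrow> vw q \<Longrightarrow> sq (u @ q) (v @ q)"
  using sq_cong[of u v "[]" q] by simp
lemma sq_base: "base_rel G Os u v \<Longrightarrow> sq u v"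
  using sgeq.base[of G Os u v "[]" "[]"] by simp

end


context eqctx begin

abbreviation "rep j g \<equiv> replicate j (LX g)"

lemma mv_r1: "g1 \<in> Os \<Longrightarrow> g2 \<in> Os \<Longrightarrow> sq [LX g1, LX g2] [LX g2, LX (gconj G g1 g2)]"
  by (rule sq_base, rule base_rel.r1)
lemma mv_D1: assumes "g \<in> Os" "k \<in> Os" shows "sq [LX g, LX k] [LX (gconj G k (inv g)), LX g]"
proof -
  have "sq [LX (gconj G k (inv g)), LX g] [LX g, LX (gconj G (gconj G k (inv g)) g)]"
    by (rule mv_r1) (use assms in auto)
  then show ?thesis using assms by (simp add: sq_sym)
qed
lemma mv_r2: "g \<in> Os \<Longrightarrow> a \<in> carrier G \<Longrightarrow> b \<in> carrier G \<Longrightarrow>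
   sq [LX g, LY a b] [LY a b, LX (gconj G g (gcomm G a b))]"
  by (rule sq_base, rule base_rel.r2)
lemma mv_free: "g \<in> Os \<Longrightarrow> a \<in> carrier G \<Longrightarrow> b \<in> carrier G \<Longrightarrow> gcomm G a b = \<one> \<Longrightarrow>
   sq [LX g, LY a b] [LY a b, LX g]"
  using mv_r2[of g a b] by simp
lemma mv_H5: assumes "h \<in> Os" "a \<in> carrier G" "b \<in> carrier G"
  shows "sq [LY a b, LX h] [LX h, LY (gconj G a h) (gconj G b h)]"
proof -
  define c where "c = gcomm G a b"
  have c: "c \<in> carrier G" using assms by (simp add: c_def)
  define g where "g = gconj G h (inv c)"
  have g: "g \<in> Os" using assms c by (simp add: g_def)
  have gc: "gconj G g c = h" using assms c by (simp add: g_def)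
  have "sq [LY a b, LX h] [LX g, LY a b]"
    using mv_r2[OF g assms(2,3)] gc by (simp add: c_def sq_sym)
  also have "sq [LX g, LY a b] [LX h, LY (gconj G a h) (gconj G b h)]"
    using sq_base[OF base_rel.r5[OF g assms(2,3)]] gc by (simp add: c_def)
  finally show ?thesis .
qed
lemma mv_E3: assumes "g \<in> Os" "a \<in> carrier G" "b \<in> carrier G"
  shows "sq [LX g, LY a b] [LY (g \<otimes> a) b, LX (gconj G g (inv b))]"
proof -
  define g' where "g' = gconj G g (a \<otimes> inv b \<otimes> inv a \<otimes> inv g)"
  have g': "g' \<in> Os" using assms by (simp add: g'_def)
  have "sq [LX g, LY a b] [LX g', LY (g \<otimes> a) b]"
    unfolding g'_def by (rule sq_base, rule base_rel.r3) (use assms in auto)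
  also have "sq [LX g', LY (g \<otimes> a) b] [LY (g \<otimes> a) b, LX (gconj G g (inv b))]"
    using mv_r2[OF g', of "g \<otimes> a" b] assms G5[of g a b] by (simp add: g'_def)
  finally show ?thesis .
qed
lemma mv_E4: assumes "g \<in> Os" "a \<in> carrier G" "b \<in> carrier G"
  shows "sq [LY a b, LX g] [LX (gconj G g (inv a)), LY a (inv g \<otimes> b)]"
proof -
  have "sq [LY a b, LX g] [LY a (inv g \<otimes> b), LX (gconj G g (b \<otimes> inv a \<otimes> inv b \<otimes> g))]"
    by (rule sq_base, rule base_rel.r4) (use assms in auto)
  also have "sq [LY a (inv g \<otimes> b), LX (gconj G g (b \<otimes> inv a \<otimes> inv b \<otimes> g))]
     [LX (gconj G g (inv a)), LY a (inv g \<otimes> b)]"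
    using sq_sym[OF mv_r2[of "gconj G g (inv a)" a "inv g \<otimes> b"]] assms G6[of g a b] by simp
  finally show ?thesis .
qed
lemma mv_r3: "g \<in> Os \<Longrightarrow> a \<in> carrier G \<Longrightarrow> b \<in> carrier G \<Longrightarrow>
  sq [LX g, LY a b] [LX (gconj G g (a \<otimes> inv b \<otimes> inv a \<otimes> inv g)), LY (g \<otimes> a) b]"
  by (rule sq_base, rule base_rel.r3)
lemma mv_R4one: assumes "g \<in> Os" "b \<in> carrier G"
  shows "sq [LY \<one> b, LX g] [LY \<one> (inv g \<otimes> b), LX g]"
  using sq_base[OF base_rel.r4[OF assms(1) one_closed assms(2)]] G9[of g b] assms by simp

lemma BL1: assumes "g \<in> Os" "k \<in> Os"
  shows "sq (rep j g @ [LX k]) ([LX (gconj G k (inv (g [^] j)))] @ rep j g)"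
proof (induction j)
  case 0 then show ?case using assms by simp
next
  case (Suc j)
  define k' where "k' = gconj G k (inv (g [^] j))"
  have k': "k' \<in> Os" using assms by (simp add: k'_def)
  have "sq (rep (Suc j) g @ [LX k]) (LX g # LX k' # rep j g)"
    using sq_congL[OF Suc, of "[LX g]"] assms by (simp add: k'_def)
  also have "sq (LX g # LX k' # rep j g) (LX (gconj G k' (inv g)) # LX g # rep j g)"
    using sq_congR[OF mv_D1[OF assms(1) k'], of "rep j g"] assms by simp
  also have "gconj G k' (inv g) = gconj G k (inv (g [^] Suc j))"
    using assms by (simp add: k'_def gconj_gconj inv_mult_group pow_comm1)
  finally show ?case by simp
qed

lemma central: assumes "g \<in> Os" "g [^] p = \<one>" "is_x_word v" "vw v"
  shows "sq (rep p g @ v) (v @ rep p g)"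
  using assms(3,4)
proof (induction v)
  case Nil then show ?case by simp
next
  case (Cons l v)
  then obtain k where l: "l = LX k" and k: "k \<in> Os" and v: "is_x_word v" "vw v"
    by (auto simp: is_x_word_def)
  have "sq (rep p g @ [LX k] @ v) ([LX k] @ rep p g @ v)"
    using sq_congR[OF BL1[OF assms(1) k, of p], of v] assms k v by simp
  also have "sq ([LX k] @ rep p g @ v) ([LX k] @ v @ rep p g)"
    using sq_congL[OF Cons.IH[OF v], of "[LX k]"] k by simp
  finally show ?case using l by simp
qed

lemma BCL: assumes "g \<in> Os" "k \<in> Os"
  shows "sq (rep j g @ [LX k]) ([LX k] @ rep j (gconj G g k))"
proof (induction j)
  case 0 then show ?case by simp
next
  case (Suc j)
  have g': "gconj G g k \<in> Os" using assms by simp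
  have "sq (rep (Suc j) g @ [LX k]) (LX g # LX k # rep j (gconj G g k))"
    using sq_congL[OF Suc, of "[LX g]"] assms by simp
  also have "sq (LX g # LX k # rep j (gconj G g k)) (LX k # LX (gconj G g k) # rep j (gconj G g k))"
    using sq_congR[OF mv_r1[OF assms], of "rep j (gconj G g k)"] assms g' by simp
  finally show ?case by simp
qed

lemma HB: assumes "h \<in> Os"
  shows "a \<in> carrier G \<Longrightarrow> b \<in> carrier G \<Longrightarrow>
    sq ([LY a b] @ rep j h) (rep j h @ [LY (gconj G a (h [^] j)) (gconj G b (h [^] j))])"
proof (induction j arbitrary: a b)
  case 0 then show ?case by simp
next
  case (Suc j)
  have "sq ([LY a b] @ rep (Suc j) h) ([LX h, LY (gconj G a h) (gconj G b h)] @ rep j h)"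
    using sq_congR[OF mv_H5[OF assms Suc.prems], of "rep j h"] assms by simp
  also have "sq ([LX h, LY (gconj G a h) (gconj G b h)] @ rep j h)
     ([LX h] @ rep j h @ [LY (gconj G (gconj G a h) (h [^] j)) (gconj G (gconj G b h) (h [^] j))])"
    using sq_congL[OF Suc.IH[of "gconj G a h" "gconj G b h"], of "[LX h]"] assms Suc.prems by simp
  finally show ?case using assms Suc.prems by (simp add: gconj_gconj pow_comm1)
qed

lemma HBp: "h \<in> Os \<Longrightarrow> h [^] p = \<one> \<Longrightarrow> a \<in> carrier G \<Longrightarrow> b \<in> carrier G \<Longrightarrow>
    sq ([LY a b] @ rep p h) (rep p h @ [LY a b])"
  using HB[of h a b p] by simp

lemma E3B: assumes "g \<in> Os" "b \<in> carrier G"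
  shows "a \<in> carrier G \<Longrightarrow> sq (rep j g @ [LY a b]) ([LY (g [^] j \<otimes> a) b] @ rep j (gconj G g (inv b)))"
proof (induction j arbitrary: a)
  case 0 then show ?case by simp
next
  case (Suc j)
  have ga: "g \<otimes> a \<in> carrier G" using assms Suc.prems by simp
  have "rep (Suc j) g @ [LY a b] = rep j g @ [LX g, LY a b]" by (simp add: replicate_append_same[symmetric])
  also have "sq (rep j g @ [LX g, LY a b]) (rep j g @ [LY (g \<otimes> a) b, LX (gconj G g (inv b))])"
    using sq_congL[OF mv_E3[OF assms(1) Suc.prems assms(2)], of "rep j g"] assms by simp
  also have "rep j g @ [LY (g \<otimes> a) b, LX (gconj G g (inv b))] = (rep j g @ [LY (g \<otimes> a) b]) @ [LX (gconj G g (inv b))]"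
    by simp
  also have "sq ((rep j g @ [LY (g \<otimes> a) b]) @ [LX (gconj G g (inv b))])
     (([LY (g [^] j \<otimes> (g \<otimes> a)) b] @ rep j (gconj G g (inv b))) @ [LX (gconj G g (inv b))])"
    using sq_congR[OF Suc.IH[OF ga]] assms by simp
  also have "([LY (g [^] j \<otimes> (g \<otimes> a)) b] @ rep j (gconj G g (inv b))) @ [LX (gconj G g (inv b))]
     = [LY (g [^] Suc j \<otimes> a) b] @ rep (Suc j) (gconj G g (inv b))"
    using assms Suc.prems by (simp add: m_assoc replicate_append_same)
  finally show ?case .
qed

lemma E4B: assumes "g \<in> Os" "a \<in> carrier G"
  shows "b \<in> carrier G \<Longrightarrow> sq ([LY a b] @ rep j g) (rep j (gconj G g (inv a)) @ [LY a (inv (g [^] j) \<otimes> b)])"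
proof (induction j arbitrary: b)
  case 0 then show ?case by simp
next
  case (Suc j)
  have gb: "inv g \<otimes> b \<in> carrier G" using assms Suc.prems by simp
  have "sq ([LY a b] @ rep (Suc j) g) ([LX (gconj G g (inv a)), LY a (inv g \<otimes> b)] @ rep j g)"
    using sq_congR[OF mv_E4[OF assms(1,2) Suc.prems], of "rep j g"] assms by simp
  also have "sq ([LX (gconj G g (inv a)), LY a (inv g \<otimes> b)] @ rep j g)
     ([LX (gconj G g (inv a))] @ rep j (gconj G g (inv a)) @ [LY a (inv (g [^] j) \<otimes> (inv g \<otimes> b))])"
    using sq_congL[OF Suc.IH[OF gb], of "[LX (gconj G g (inv a))]"] assms by simp
  finally show ?case using assms Suc.prems by (simp add: m_assoc inv_mult_group inv_pow_comm)
qed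

lemma block_handles: assumes "h \<in> Os" "h [^] p = \<one>" "\<forall>(a,b)\<in>set ab. a \<in> carrier G \<and> b \<in> carrier G"
  shows "sq (rep p h @ map (\<lambda>(a,b). LY a b) ab) (map (\<lambda>(a,b). LY a b) ab @ rep p h)"
  using assms(3)
proof (induction ab)
  case Nil then show ?case by simp
next
  case (Cons x ab)
  obtain a b where x: "x = (a,b)" by fastforce
  have ab: "a \<in> carrier G" "b \<in> carrier G" using Cons.prems x by auto
  have v: "vw (map (\<lambda>(a,b). LY a b) ab)" using Cons.prems by (auto simp: valid_word_def valid_letter_def)
  have "sq (rep p h @ [LY a b] @ map (\<lambda>(a,b). LY a b) ab) ([LY a b] @ rep p h @ map (\<lambda>(a,b). LY a b) ab)"
    using sq_congR[OF sq_sym[OF HBp[OF assms(1,2) ab]] v] by simp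
  also have "sq ([LY a b] @ rep p h @ map (\<lambda>(a,b). LY a b) ab) ([LY a b] @ map (\<lambda>(a,b). LY a b) ab @ rep p h)"
    using sq_congL[OF Cons.IH, of "[LY a b]"] Cons.prems ab by simp
  finally show ?case using x by simp
qed

lemma free_word: assumes "a \<in> carrier G" "b \<in> carrier G" "gcomm G a b = \<one>"
  shows "is_x_word v \<Longrightarrow> vw v \<Longrightarrow> sq (v @ [LY a b]) ([LY a b] @ v)"
proof (induction v)
  case Nil then show ?case by simp
next
  case (Cons l v)
  then obtain k where l: "l = LX k" and k: "k \<in> Os" and v: "is_x_word v" "vw v"
    by (auto simp: is_x_word_def)
  have "sq ([LX k] @ v @ [LY a b]) ([LX k] @ [LY a b] @ v)"
    using sq_congL[OF Cons.IH[OF v], of "[LX k]"] k by simp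
  also have "[LX k] @ [LY a b] @ v = [LX k, LY a b] @ v" by simp
  also have "sq ([LX k, LY a b] @ v) ([LY a b, LX k] @ v)"
    using sq_congR[OF mv_free[OF k assms] v(2)] .
  finally show ?case using l by simp
qed

end


context eqctx begin

definition xs :: "'a letter list \<Rightarrow> 'a set" where "xs w = {k. LX k \<in> set w}"
definition cx :: "'a \<Rightarrow> 'a letter \<Rightarrow> 'a letter" where
  "cx t l = (case l of LX k \<Rightarrow> LX (gconj G k t) | LY a b \<Rightarrow> LY a b)"
definition sametau :: "'a letter list \<Rightarrow> 'a letter list \<Rightarrow> bool" where
  "sametau u v \<longleftrightarrow> (\<forall>C\<in>set Cs. tau C u = tau C v)"

lemma xs_simps[simp]: "xs [] = {}" "xs (LX k # w) = insert k (xs w)" "xs (LY a b # w) = xs w"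
  "xs (u @ v) = xs u \<union> xs v" "xs (rep n g) = (if n = 0 then {} else {g})"
  by (auto simp: xs_def)
lemma cx_LX[simp]: "cx t (LX k) = LX (gconj G k t)" by (simp add: cx_def)

lemma tau_simps[simp]: "tau C [] = 0" "tau C (u @ v) = tau C u + tau C v"
  "tau C (LX k # w) = (if k \<in> C then 1 else 0) + tau C w"
  "tau C (LY a b # w) = tau C w"
  "tau C (rep n g) = (if g \<in> C then n else 0)"
  by (auto simp: tau_def)

lemma sametau_refl[simp]: "sametau u u" by (simp add: sametau_def)
lemma sametau_sym: "sametau u v \<Longrightarrow> sametau v u" by (simp add: sametau_def)
lemma sametau_trans[trans]: "sametau u v \<Longrightarrow> sametau v w \<Longrightarrow> sametau u w" by (simp add: sametau_def)
lemma sametau_app: "sametau u u' \<Longrightarrow> sametau v v' \<Longrightarrow> sametau (u @ v) (u' @ v')"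
  by (simp add: sametau_def)
lemma sametau_conj1: "k \<in> carrier G \<Longrightarrow> t \<in> carrier G \<Longrightarrow> sametau [LX (gconj G k t)] [LX k]"
  using class_conj by (simp add: sametau_def)
lemma sametau_rep_conj: "k \<in> carrier G \<Longrightarrow> t \<in> carrier G \<Longrightarrow> sametau (rep n (gconj G k t)) (rep n k)"
  using class_conj by (simp add: sametau_def)

lemma x_word_simps[simp]: "is_x_word []" "is_x_word (l # w) \<longleftrightarrow> (\<exists>g. l = LX g) \<and> is_x_word w"
  "is_x_word (u @ v) \<longleftrightarrow> is_x_word u \<and> is_x_word v" "is_x_word (rep n g)"
  by (auto simp: is_x_word_def)

lemma xs_sub: "vw w \<Longrightarrow> xs w \<subseteq> Os"
  by (auto simp: xs_def valid_word_def valid_letter_def)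

lemma move_right: assumes "g \<in> Os"
  shows "is_x_word v \<Longrightarrow> vw v \<Longrightarrow> sq (LX g # v) (map (cx (inv g)) v @ [LX g])"
proof (induction v)
  case Nil then show ?case by simp
next
  case (Cons l v)
  then obtain k where l: "l = LX k" and k: "k \<in> Os" and v: "is_x_word v" "vw v"
    by auto
  have "sq ([LX g, LX k] @ v) ([LX (gconj G k (inv g)), LX g] @ v)"
    using sq_congR[OF mv_D1[OF assms k] v(2)] .
  also have "[LX (gconj G k (inv g)), LX g] @ v = [LX (gconj G k (inv g))] @ (LX g # v)" by simp
  also have "sq ([LX (gconj G k (inv g))] @ (LX g # v)) ([LX (gconj G k (inv g))] @ (map (cx (inv g)) v @ [LX g]))"
    using sq_congL[OF Cons.IH[OF v], of "[LX (gconj G k (inv g))]"] assms k by simp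
  finally show ?case using l by simp
qed

lemma cx_word: assumes "t \<in> carrier G"
  shows "is_x_word v \<Longrightarrow> vw v \<Longrightarrow> is_x_word (map (cx t) v) \<and> vw (map (cx t) v) \<and> sametau (map (cx t) v) v
     \<and> xs (map (cx t) v) = (\<lambda>k. gconj G k t) ` xs v"
proof (induction v)
  case Nil then show ?case by simp
next
  case (Cons l v)
  then obtain k where l: "l = LX k" and k: "k \<in> Os" and v: "is_x_word v" "vw v"
    by auto
  have st: "sametau (LX (gconj G k t) # map (cx t) v) (LX k # v)"
    using sametau_app[OF sametau_conj1[of k t] conjunct1[OF conjunct2[OF conjunct2[OF Cons.IH[OF v]]]]] k assms by simp
  show ?case using Cons.IH[OF v] l k assms st by auto
qed

lemma gather: assumes "g \<in> Os"
  shows "is_x_word w \<Longrightarrow> vw w \<Longrightarrow> \<exists>w'. is_x_word w' \<and> vw w' \<and>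
    sq w (w' @ rep (count_list w (LX g)) g) \<and> sametau (w' @ rep (count_list w (LX g)) g) w \<and>
    xs w \<subseteq> generate G (insert g (xs w'))"
proof (induction w)
  case Nil then show ?case by (intro exI[of _ "[]"]) simp
next
  case (Cons l w)
  then obtain k where l: "l = LX k" and k: "k \<in> Os" and w: "is_x_word w" "vw w"
    by auto
  obtain w0 where w0: "is_x_word w0" "vw w0" "sq w (w0 @ rep (count_list w (LX g)) g)"
    "sametau (w0 @ rep (count_list w (LX g)) g) w" "xs w \<subseteq> generate G (insert g (xs w0))"
    using Cons.IH[OF w] by blast
  let ?c = "count_list w (LX g)"
  show ?case
  proof (cases "k = g")
    case True
    define w' where "w' = map (cx (inv g)) w0"
    have cw: "is_x_word w' \<and> vw w' \<and> sametau w' w0 \<and> xs w' = (\<lambda>k. gconj G k (inv g)) ` xs w0"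
      unfolding w'_def using cx_word[of "inv g" w0] w0 assms by auto
    have "sq (LX g # w) ([LX g] @ (w0 @ rep ?c g))"
      using sq_congL[OF w0(3), of "[LX g]"] assms by simp
    also have "sq ([LX g] @ (w0 @ rep ?c g)) ((w' @ [LX g]) @ rep ?c g)"
      using sq_congR[OF move_right[OF assms w0(1,2)], of "rep ?c g"] assms by (simp add: w'_def)
    also have "(w' @ [LX g]) @ rep ?c g = w' @ rep (Suc ?c) g" by (simp add: replicate_append_same[symmetric])
    finally have sq1: "sq (LX g # w) (w' @ rep (Suc ?c) g)" .
    have st: "sametau (w' @ rep (Suc ?c) g) (LX g # w)"
    proof -
      have "sametau (w' @ rep (Suc ?c) g) (w0 @ rep ?c g @ [LX g])"
        using cw by (auto simp: sametau_def)
      also have "sametau (w0 @ rep ?c g @ [LX g]) (LX g # w)"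
        using w0(4) by (auto simp: sametau_def)
      finally show ?thesis .
    qed
    have gs: "insert g (xs w0) \<subseteq> generate G (insert g (xs w'))"
    proof
      fix x assume "x \<in> insert g (xs w0)"
      then show "x \<in> generate G (insert g (xs w'))"
      proof
        assume "x = g" then show ?thesis by (simp add: generate.incl)
      next
        assume x: "x \<in> xs w0"
        have xO: "x \<in> carrier G" using xs_sub[OF w0(2)] x Os_carrier by blast
        have "gconj G x (inv g) \<in> xs w'" using cw x by auto
        then have a: "gconj G x (inv g) \<in> generate G (insert g (xs w'))" by (simp add: generate.incl)
        have b: "g \<in> generate G (insert g (xs w'))" by (simp add: generate.incl)
        have c: "inv g \<in> generate G (insert g (xs w'))" by (simp add: generate.inv)
        have "inv g \<otimes> gconj G x (inv g) \<otimes> g \<in> generate G (insert g (xs w'))"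
          using a b c by (simp add: generate.eng)
        moreover have "inv g \<otimes> gconj G x (inv g) \<otimes> g = x" using xO assms by (simp add: gsimp)
        ultimately show ?thesis by simp
      qed
    qed
    have sub: "insert g (xs w') \<subseteq> carrier G" using assms xs_sub[of w'] cw Os_sub by auto
    have "xs (LX g # w) \<subseteq> generate G (insert g (xs w'))"
    proof -
      have "generate G (insert g (xs w0)) \<subseteq> generate G (insert g (xs w'))"
        by (rule generate_subgroup_incl[OF gs generate_is_subgroup[OF sub]])
      then show ?thesis using w0(5) gs by auto
    qed
    then show ?thesis using sq1 st cw l True assms by (intro exI[of _ w']) simp
  next
    case False
    have "sq (LX k # w) ([LX k] @ (w0 @ rep ?c g))"
      using sq_congL[OF w0(3), of "[LX k]"] k by simp
    moreover have "sametau (LX k # w0 @ rep ?c g) (LX k # w)"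
      using w0(4) by (auto simp: sametau_def)
    moreover have "xs (LX k # w) \<subseteq> generate G (insert g (xs (LX k # w0)))"
    proof -
      have "xs w0 \<subseteq> xs (LX k # w0)" by auto
      then have "generate G (insert g (xs w0)) \<subseteq> generate G (insert g (xs (LX k # w0)))"
        by (intro mono_generate) auto
      then show ?thesis using w0(5) by (auto intro: generate.incl)
    qed
    ultimately show ?thesis using l False k w0 by (intro exI[of _ "LX k # w0"]) simp
  qed
qed

lemma tau_count: "tau C w = (\<Sum>g\<in>C. count_list w (LX g))" if "finite C"
proof (induction w)
  case Nil then show ?case by simp
next
  case (Cons l w)
  show ?case
  proof (cases l)
    case (LX k)
    have "(\<Sum>g\<in>C. count_list (l # w) (LX g)) = (\<Sum>g\<in>C. (if k = g then 1 else 0) + count_list w (LX g))"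
      using LX by (intro sum.cong) auto
    also have "\<dots> = (if k \<in> C then 1 else 0) + (\<Sum>g\<in>C. count_list w (LX g))"
      using that by (simp add: sum.distrib)
    finally show ?thesis using Cons LX by simp
  next
    case (LY a b) then show ?thesis using Cons by simp
  qed
qed

lemma class_finite: "C \<in> set Cs \<Longrightarrow> finite C" using class_sub fin finite_subset by blast
lemma class_ne: "C \<in> set Cs \<Longrightarrow> C \<noteq> {}"
  using Cs_class by (force simp: conj_class_def)

lemma pigeon: assumes C: "C \<in> set Cs" and h: "\<forall>g\<in>C. tau C w > card C * ord g"
  shows "\<exists>g\<in>C. count_list w (LX g) > ord g"
proof (rule ccontr)
  assume "\<not> ?thesis"
  then have le: "\<forall>g\<in>C. count_list w (LX g) \<le> ord g" by auto
  have fC: "finite C" using class_finite C .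
  obtain g0 where g0: "g0 \<in> C" "\<forall>g\<in>C. ord g \<le> ord g0"
  proof -
    have "Max (ord ` C) \<in> ord ` C" using fC class_ne[OF C] by (intro Max_in) auto
    then obtain g0 where "g0 \<in> C" "ord g0 = Max (ord ` C)" by auto
    moreover have "\<forall>g\<in>C. ord g \<le> Max (ord ` C)" using fC by auto
    ultimately show ?thesis using that by auto
  qed
  have "tau C w = (\<Sum>g\<in>C. count_list w (LX g))" using tau_count fC by blast
  also have "\<dots> \<le> card C * ord g0"
    using sum_bounded_above[of C "\<lambda>g. count_list w (LX g)" "ord g0"] le g0 by fastforce
  finally show False using h g0 by fastforce
qed

lemma gen_closed: assumes S: "S \<subseteq> carrier G" and P1: "P \<one>" and PS: "\<And>s. s \<in> S \<Longrightarrow> P s"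
  and Pm: "\<And>x y. x \<in> carrier G \<Longrightarrow> y \<in> carrier G \<Longrightarrow> P x \<Longrightarrow> P y \<Longrightarrow> P (x \<otimes> y)"
  and t: "t \<in> generate G S"
  shows "P t"
  using t
proof (induction rule: generate.induct)
  case one then show ?case using P1 .
next
  case (incl h) then show ?case by (rule PS)
next
  case (inv h)
  have h: "h \<in> carrier G" using inv S by auto
  have pw: "P (h [^] (n::nat))" for n
  proof (induction n)
    case 0 then show ?case using P1 by simp
  next
    case (Suc n) then show ?case using Pm[of "h [^] n" h] PS[OF inv] h by simp
  qed
  have o: "ord h \<ge> 1" using ord_ge_1[OF fin h] .
  have "h [^] (ord h - 1) \<otimes> h = h [^] ord h" using o h by (simp add: nat_pow_Suc[symmetric] del: nat_pow_Suc)
  also have "\<dots> = \<one>" using h by simp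
  finally have "inv h = h [^] (ord h - 1)" using h by (intro inv_equality) auto
  then show ?case using pw by simp
next
  case (eng h1 h2)
  have "h1 \<in> carrier G" "h2 \<in> carrier G"
    using eng.hyps generate_incl[OF S] by auto
  then show ?case using Pm eng by blast
qed

end


context eqctx begin

abbreviation "ys ab \<equiv> map (\<lambda>(a,b). LY a b) ab"
definition okab :: "('a \<times> 'a) list \<Rightarrow> bool" where
  "okab ab \<longleftrightarrow> (\<forall>(a,b)\<in>set ab. a \<in> carrier G \<and> b \<in> carrier G)"

lemma okab_vw: "okab ab \<Longrightarrow> vw (ys ab)"
  by (auto simp: okab_def valid_word_def valid_letter_def)
lemma okab_simps[simp]: "okab []" "okab ((a,b) # ab) \<longleftrightarrow> a \<in> carrier G \<and> b \<in> carrier G \<and> okab ab"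
  "okab (ab1 @ ab2) \<longleftrightarrow> okab ab1 \<and> okab ab2"
  by (auto simp: okab_def)

lemma via_handle: assumes "(a,b) \<in> set ab" "okab ab" "g \<in> Os" "g' \<in> Os" "g [^] p = \<one>" "g' [^] p = \<one>"
  "sq (rep p g @ [LY a b]) (rep p g' @ [LY a b])" "vw u" "vw r"
  shows "sq (u @ rep p g @ ys ab @ r) (u @ rep p g' @ ys ab @ r)"
proof -
  obtain ab1 ab2 where ab: "ab = ab1 @ (a,b) # ab2" using split_list[OF assms(1)] by blast
  have ok: "okab ab1" "okab ab2" "a \<in> carrier G" "b \<in> carrier G" using assms(2) ab by auto
  have v: "vw (ys ab1)" "vw (ys ab2)" using okab_vw ok by auto
  have e: "\<And>x. u @ rep p x @ ys ab @ r = u @ (rep p x @ ys ab1) @ ([LY a b] @ ys ab2 @ r)" using ab by simp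
  have e2: "\<And>x. u @ (ys ab1 @ rep p x) @ ([LY a b] @ ys ab2 @ r) = (u @ ys ab1) @ (rep p x @ [LY a b]) @ (ys ab2 @ r)" by simp
  have bh: "\<And>x. x \<in> Os \<Longrightarrow> x [^] p = \<one> \<Longrightarrow> sq (rep p x @ ys ab1) (ys ab1 @ rep p x)"
    using block_handles ok(1) by (simp add: okab_def)
  have "sq (u @ rep p g @ ys ab @ r) ((u @ ys ab1) @ (rep p g @ [LY a b]) @ (ys ab2 @ r))"
    using sq_cong[OF bh[OF assms(3,5)], of u "[LY a b] @ ys ab2 @ r"] assms ok v e e2 by simp
  also have "sq \<dots> ((u @ ys ab1) @ (rep p g' @ [LY a b]) @ (ys ab2 @ r))"
    using sq_cong[OF assms(7), of "u @ ys ab1" "ys ab2 @ r"] assms v by simp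
  also have "sq \<dots> (u @ rep p g' @ ys ab @ r)"
    using sq_sym[OF sq_cong[OF bh[OF assms(4,6)], of u "[LY a b] @ ys ab2 @ r"]] assms ok v e e2 by simp
  finally show ?thesis .
qed

lemma BC: assumes u: "is_x_word u" "vw u" and ab: "okab ab" and r: "vw r"
  and t: "t \<in> generate G (xs u \<union> fst ` set ab \<union> snd ` set ab)"
  shows "g \<in> Os \<Longrightarrow> g [^] p = \<one> \<Longrightarrow> sq (u @ rep p g @ ys ab @ r) (u @ rep p (gconj G g t) @ ys ab @ r)"
proof -
  define P where "P t \<longleftrightarrow> (\<forall>g p. g \<in> Os \<longrightarrow> g [^] p = \<one> \<longrightarrow>
     sq (u @ rep p g @ ys ab @ r) (u @ rep p (gconj G g t) @ ys ab @ r))" for t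
  define S where "S = xs u \<union> fst ` set ab \<union> (\<lambda>x. inv x) ` snd ` set ab"
  have abc: "\<And>a b. (a,b) \<in> set ab \<Longrightarrow> a \<in> carrier G \<and> b \<in> carrier G" using ab by (auto simp: okab_def)
  have Sc: "S \<subseteq> carrier G" unfolding S_def using xs_sub[OF u(2)] Os_sub abc by fastforce
  have Oc: "xs u \<union> fst ` set ab \<union> snd ` set ab \<subseteq> carrier G" using xs_sub[OF u(2)] Os_sub abc by fastforce
  have sub: "generate G (xs u \<union> fst ` set ab \<union> snd ` set ab) \<subseteq> generate G S"
  proof (rule generate_subgroup_incl[OF _ generate_is_subgroup[OF Sc]])
    show "xs u \<union> fst ` set ab \<union> snd ` set ab \<subseteq> generate G S"
    proof
      fix x assume x: "x \<in> xs u \<union> fst ` set ab \<union> snd ` set ab"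
      show "x \<in> generate G S"
      proof (cases "x \<in> snd ` set ab")
        case True
        then have "inv x \<in> S" unfolding S_def by auto
        then have "inv (inv x) \<in> generate G S" by (rule generate.inv)
        then show ?thesis using True Oc by auto
      next
        case False then show ?thesis using x unfolding S_def by (auto intro: generate.incl)
      qed
    qed
  qed
  have P1: "P \<one>" unfolding P_def by simp
  have Pm: "P (x \<otimes> y)" if "x \<in> carrier G" "y \<in> carrier G" "P x" "P y" for x y
    unfolding P_def
  proof (intro allI impI)
    fix g and p :: nat assume g: "g \<in> Os" "g [^] p = \<one>"
    have g1: "gconj G g x \<in> Os" "(gconj G g x) [^] p = \<one>" using g that gconj_pow1[OF Os_carrier[OF g(1)] that(1) g(2)] by simp_all
    have "sq (u @ rep p g @ ys ab @ r) (u @ rep p (gconj G g x) @ ys ab @ r)" using that g P_def by blast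
    also have "sq \<dots> (u @ rep p (gconj G (gconj G g x) y) @ ys ab @ r)" using that g1 P_def by blast
    finally show "sq (u @ rep p g @ ys ab @ r) (u @ rep p (gconj G g (x \<otimes> y)) @ ys ab @ r)"
      using that g by (simp add: gconj_gconj)
  qed
  have PS: "P s" if s: "s \<in> S" for s
    unfolding P_def
  proof (intro allI impI)
    fix g and p :: nat assume g: "g \<in> Os" "g [^] p = \<one>"
    consider (L) "s \<in> xs u" | (A) a b where "(a,b) \<in> set ab" "s = a" | (B) a b where "(a,b) \<in> set ab" "s = inv b"
      using s unfolding S_def by force
    then show "sq (u @ rep p g @ ys ab @ r) (u @ rep p (gconj G g s) @ ys ab @ r)"
    proof cases
      case L
      then have "LX s \<in> set u" by (simp add: xs_def)
      then obtain u1 u2 where uu: "u = u1 @ LX s # u2" using split_list by metis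
      have sO: "s \<in> Os" using u(2) uu by simp
      have v: "is_x_word u1" "vw u1" "is_x_word u2" "vw u2" using u uu by auto
      have q: "vw (ys ab @ r)" using okab_vw[OF ab] r by simp
      let ?g' = "gconj G g s"
      have g': "?g' \<in> Os" "?g' [^] p = \<one>" using g sO gconj_pow1[OF Os_carrier[OF g(1)] Os_carrier[OF sO] g(2)] by simp_all
      have "sq (u @ rep p g @ ys ab @ r) (u1 @ (rep p g @ [LX s] @ u2) @ (ys ab @ r))"
        using sq_cong[OF sq_sym[OF central[OF g, of "[LX s] @ u2"]] v(2) q] v sO uu by simp
      also have "sq \<dots> (u1 @ ([LX s] @ rep p ?g' @ u2) @ (ys ab @ r))"
        using sq_cong[OF sq_congR[OF BCL[OF g(1) sO, of p] v(4)] v(2) q] by simp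
      also have "sq \<dots> (u1 @ ([LX s] @ u2 @ rep p ?g') @ (ys ab @ r))"
        using sq_cong[OF sq_congL[OF central[OF g' v(3,4)], of "[LX s]"] v(2) q] sO by simp
      finally show ?thesis using uu by simp
    next
      case A
      have ac: "a \<in> carrier G" "b \<in> carrier G" using abc A by auto
      let ?g' = "gconj G g a"
      have g': "?g' \<in> Os" "?g' [^] p = \<one>" using g ac gconj_pow1[OF Os_carrier[OF g(1)] ac(1) g(2)] by simp_all
      have "sq (rep p g @ [LY a b]) ([LY a b] @ rep p ?g')"
        using sq_sym[OF E4B[OF g'(1) ac(1) ac(2), of p]] g' ac g by simp
      also have "sq \<dots> (rep p ?g' @ [LY a b])" using HBp[OF g' ac] .
      finally show ?thesis using via_handle[OF A(1) ab g(1) g'(1) g(2) g'(2) _ u(2) r] A by simp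
    next
      case B
      have ac: "a \<in> carrier G" "b \<in> carrier G" using abc B by auto
      let ?g' = "gconj G g (inv b)"
      have g': "?g' \<in> Os" "?g' [^] p = \<one>" using g ac gconj_pow1[OF Os_carrier[OF g(1)] inv_closed[OF ac(2)] g(2)] by simp_all
      have "sq (rep p g @ [LY a b]) ([LY a b] @ rep p ?g')"
        using E3B[OF g(1) ac(2) ac(1), of p] g ac by simp
      also have "sq \<dots> (rep p ?g' @ [LY a b])" using HBp[OF g' ac] .
      finally show ?thesis using via_handle[OF B(1) ab g(1) g'(1) g(2) g'(2) _ u(2) r] B by simp
    qed
  qed
  have "P t" using gen_closed[OF Sc P1 PS Pm] t sub by blast
  then show "g \<in> Os \<Longrightarrow> g [^] p = \<one> \<Longrightarrow> ?thesis" unfolding P_def by blast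
qed

end


context eqctx begin

definition TC :: "'a letter list \<Rightarrow> bool" where
  "TC w \<longleftrightarrow> (\<forall>C\<in>set Cs. \<forall>g\<in>C. card C * ord g < tau C w)"
definition Rich :: "'a letter list \<Rightarrow> bool" where
  "Rich w \<longleftrightarrow> is_x_word w \<and> vw w \<and> TC w \<and> generate G (xs w) = carrier G"

lemma TC_sametau: "sametau u v \<Longrightarrow> TC v \<Longrightarrow> TC u"
  by (simp add: sametau_def TC_def)

lemma xs_carrier: "vw w \<Longrightarrow> xs w \<subseteq> carrier G" using xs_sub Os_sub by blast

lemma gen_full: assumes "vw w'" "generate G Xs = carrier G" "Xs \<subseteq> generate G (xs w')"
  shows "generate G (xs w') = carrier G"
proof
  show "generate G (xs w') \<subseteq> carrier G" by (rule generate_incl[OF xs_carrier[OF assms(1)]])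
  show "carrier G \<subseteq> generate G (xs w')"
    using generate_subgroup_incl[OF assms(3) generate_is_subgroup[OF xs_carrier[OF assms(1)]]] assms(2) by simp
qed

lemma in_Os: "oo \<in> Os \<Longrightarrow> \<exists>C\<in>set Cs. oo \<in> C" by (simp add: Union_iff)
lemma class_Os: "C \<in> set Cs \<Longrightarrow> g \<in> C \<Longrightarrow> g \<in> Os" by (auto simp: Union_iff)

lemma prepare: assumes w: "is_x_word w" "vw w" "TC w" and C: "C \<in> set Cs"
  shows "\<exists>u g p. g \<in> C \<and> p \<ge> 1 \<and> g [^] p = \<one> \<and> is_x_word u \<and> vw u \<and> g \<in> xs u \<and>
     sq w (u @ rep p g) \<and> sametau (u @ rep p g) w \<and> xs w \<subseteq> generate G (xs u)"
proof -
  have tc: "\<forall>g\<in>C. card C * ord g < tau C w" using w(3) C by (simp add: TC_def)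
  obtain g where g: "g \<in> C" "count_list w (LX g) > ord g"
    using pigeon[OF C tc] by blast
  have gO: "g \<in> Os" using class_Os[OF C g(1)] .
  let ?c = "count_list w (LX g)" and ?p = "ord g"
  obtain w' where w': "is_x_word w'" "vw w'" "sq w (w' @ rep ?c g)" "sametau (w' @ rep ?c g) w"
    "xs w \<subseteq> generate G (insert g (xs w'))"
    using gather[OF gO w(1,2)] by blast
  define u where "u = w' @ rep (?c - ?p) g"
  have e: "w' @ rep ?c g = u @ rep ?p g"
    unfolding u_def using g(2) by (simp add: replicate_add[symmetric])
  have xu: "xs u = insert g (xs w')" unfolding u_def using g(2) by auto
  have p1: "?p \<ge> 1" using ord_ge_1[OF fin Os_carrier[OF gO]] .
  have A: "is_x_word u" "vw u" using w'(1,2) gO by (simp_all add: u_def)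
  have B: "sq w (u @ rep ?p g)" "sametau (u @ rep ?p g) w" using w'(3,4) e by simp_all
  have D: "xs w \<subseteq> generate G (xs u)" "g \<in> xs u" using w'(5) xu by simp_all
  have E: "g [^] ?p = \<one>" using gO by simp
  have "g \<in> C \<and> ?p \<ge> 1 \<and> g [^] ?p = \<one> \<and> is_x_word u \<and> vw u \<and> g \<in> xs u \<and>
     sq w (u @ rep ?p g) \<and> sametau (u @ rep ?p g) w \<and> xs w \<subseteq> generate G (xs u)"
    using g(1) p1 E A B D by blast
  then show ?thesis by blast
qed

lemma A_step: assumes w: "Rich w" and oo: "oo \<in> Os" and ab: "a \<in> carrier G" "b \<in> carrier G" and r: "vw rest"
  shows "\<exists>w''. Rich w'' \<and> sq (w @ LY a b # rest) (w'' @ LY (oo \<otimes> a) b # rest)"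
proof -
  obtain C where C: "C \<in> set Cs" "oo \<in> C" using in_Os[OF oo] by blast
  have wr: "is_x_word w" "vw w" "TC w" "generate G (xs w) = carrier G" using w by (auto simp: Rich_def)
  obtain u g p where up: "g \<in> C" "p \<ge> 1" "g [^] p = \<one>" "is_x_word u" "vw u" "g \<in> xs u"
     "sq w (u @ rep p g)" "sametau (u @ rep p g) w" "xs w \<subseteq> generate G (xs u)"
    using prepare[OF wr(1,2,3) C(1)] by blast
  have gO: "g \<in> Os" using class_Os[OF C(1) up(1)] .
  have gu: "generate G (xs u) = carrier G" using gen_full[OF up(5) wr(4) up(9)] .
  obtain t where t: "t \<in> carrier G" "oo = gconj G g t" using class_conj_ex[OF C(1) up(1) C(2)] by blast
  have tg: "t \<in> generate G (xs u \<union> fst ` set [] \<union> snd ` set [])" using t gu by simp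
  define o' where "o' = gconj G oo (a \<otimes> inv b \<otimes> inv a \<otimes> inv oo)"
  have oc: "oo \<in> carrier G" using oo by simp
  have o'O: "o' \<in> Os" using oo ab oc by (simp add: o'_def)
  have rs: "vw (LY a b # rest)" using ab r by simp
  have rp: "rep p oo = rep (p - 1) oo @ [LX oo]" using up(2) by (cases p) (simp_all add: replicate_append_same)
  have "sq (w @ LY a b # rest) ((u @ rep p g) @ LY a b # rest)" using sq_congR[OF up(7) rs] .
  also have "sq ((u @ rep p g) @ LY a b # rest) ((u @ rep p oo) @ LY a b # rest)"
    using BC[OF up(4,5) okab_simps(1) rs tg gO up(3)] t by simp
  also have "(u @ rep p oo) @ LY a b # rest = (u @ rep (p - 1) oo) @ [LX oo, LY a b] @ rest"
    using rp by simp
  also have "sq \<dots> ((u @ rep (p - 1) oo) @ [LX o', LY (oo \<otimes> a) b] @ rest)"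
    using sq_cong[OF mv_r3[OF oo ab], of "u @ rep (p - 1) oo" rest] up(5) oo r by (simp add: o'_def)
  finally have sq1: "sq (w @ LY a b # rest) ((u @ rep (p - 1) oo @ [LX o']) @ LY (oo \<otimes> a) b # rest)" by simp
  have st: "sametau (u @ rep (p - 1) oo @ [LX o']) w"
  proof -
    have "sametau (u @ rep (p - 1) oo @ [LX o']) (u @ rep (p - 1) oo @ [LX oo])"
      using sametau_conj1[of oo "a \<otimes> inv b \<otimes> inv a \<otimes> inv oo"] oc ab
      by (auto simp: o'_def sametau_def)
    also have "u @ rep (p - 1) oo @ [LX oo] = u @ rep p oo"
      using rp by simp
    also have "sametau (u @ rep p oo) (u @ rep p g)"
      using sametau_app[OF sametau_refl sametau_rep_conj[of g t p]] t gO by simp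
    also have "sametau (u @ rep p g) w" using up(8) .
    finally show ?thesis .
  qed
  have R: "Rich (u @ rep (p - 1) oo @ [LX o'])"
    unfolding Rich_def
  proof (intro conjI)
    show "is_x_word (u @ rep (p - 1) oo @ [LX o'])" using up(4) by simp
    show vv: "vw (u @ rep (p - 1) oo @ [LX o'])" using up(5) oo o'O by simp
    show "TC (u @ rep (p - 1) oo @ [LX o'])" using TC_sametau[OF st wr(3)] .
    show "generate G (xs (u @ rep (p - 1) oo @ [LX o'])) = carrier G"
    proof (rule gen_full[OF vv gu])
      show "xs u \<subseteq> generate G (xs (u @ rep (p - 1) oo @ [LX o']))"
        by (auto intro: generate.incl)
    qed
  qed
  show ?thesis using R sq1 by auto
qed

end


context eqctx begin

lemma A_gen: assumes t: "t \<in> carrier G"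
  shows "\<forall>w a b rest. Rich w \<longrightarrow> a \<in> carrier G \<longrightarrow> b \<in> carrier G \<longrightarrow> vw rest \<longrightarrow>
     (\<exists>w''. Rich w'' \<and> sq (w @ LY a b # rest) (w'' @ LY (t \<otimes> a) b # rest))"
proof -
  define P where "P t \<longleftrightarrow> (\<forall>w a b rest. Rich w \<longrightarrow> a \<in> carrier G \<longrightarrow> b \<in> carrier G \<longrightarrow> vw rest \<longrightarrow>
     (\<exists>w''. Rich w'' \<and> sq (w @ LY a b # rest) (w'' @ LY (t \<otimes> a) b # rest)))" for t
  have P1: "P \<one>" unfolding P_def by (auto intro: sq_refl)
  have PS: "P s" if "s \<in> Os" for s unfolding P_def using A_step that by blast
  have Pm: "P (x \<otimes> y)" if xy: "x \<in> carrier G" "y \<in> carrier G" "P x" "P y" for x y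
    unfolding P_def
  proof (intro allI impI)
    fix w a b rest assume h: "Rich w" "a \<in> carrier G" "b \<in> carrier G" "vw rest"
    obtain w1 where w1: "Rich w1" "sq (w @ LY a b # rest) (w1 @ LY (y \<otimes> a) b # rest)"
      using xy(4) h unfolding P_def by blast
    have ya: "y \<otimes> a \<in> carrier G" using xy h by simp
    obtain w2 where w2: "Rich w2" "sq (w1 @ LY (y \<otimes> a) b # rest) (w2 @ LY (x \<otimes> (y \<otimes> a)) b # rest)"
      using xy(3) w1(1) ya h unfolding P_def by blast
    have "sq (w @ LY a b # rest) (w2 @ LY (x \<otimes> y \<otimes> a) b # rest)"
      using sq_trans[OF w1(2) w2(2)] xy h by (simp add: m_assoc)
    then show "\<exists>w''. Rich w'' \<and> sq (w @ LY a b # rest) (w'' @ LY (x \<otimes> y \<otimes> a) b # rest)"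
      using w2(1) by blast
  qed
  have "P t" using gen_closed[OF Os_sub P1 PS Pm] t gen by simp
  then show ?thesis unfolding P_def .
qed

lemma free11: "is_x_word v \<Longrightarrow> vw v \<Longrightarrow> sq (v @ [LY \<one> \<one>]) ([LY \<one> \<one>] @ v)"
  using free_word[of "\<one>" "\<one>" v] by simp

lemma B_move: assumes w: "is_x_word w" "vw w" and h: "h \<in> xs w" and r: "vw rest" and c: "c \<in> carrier G"
  shows "sq (w @ LY \<one> c # rest) (w @ LY \<one> (inv h \<otimes> c) # rest)"
proof -
  have "LX h \<in> set w" using h by (simp add: xs_def)
  then obtain w1 w2 where ww: "w = w1 @ LX h # w2" using split_list by metis
  have v: "is_x_word w1" "vw w1" "is_x_word w2" "vw w2" "h \<in> Os" using w ww by auto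
  have F: "sq (w @ LY \<one> d # rest) (w1 @ [LY \<one> d, LX h] @ (w2 @ rest))" if d: "d \<in> carrier G" for d
  proof -
    have "w @ LY \<one> d # rest = (w1 @ [LX h]) @ (w2 @ [LY \<one> d]) @ rest" using ww by simp
    also have "sq \<dots> ((w1 @ [LX h]) @ ([LY \<one> d] @ w2) @ rest)"
      using sq_cong[OF free_word[OF one_closed d _ v(3,4)], of "w1 @ [LX h]" rest] v r d by simp
    also have "\<dots> = w1 @ [LX h, LY \<one> d] @ (w2 @ rest)" by simp
    also have "sq \<dots> (w1 @ [LY \<one> d, LX h] @ (w2 @ rest))"
      using sq_cong[OF mv_free[OF v(5) one_closed d]] v r d by simp
    finally show ?thesis .
  qed
  have ic: "inv h \<otimes> c \<in> carrier G" using v c by simp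
  have "sq (w @ LY \<one> c # rest) (w1 @ [LY \<one> c, LX h] @ (w2 @ rest))" using F[OF c] .
  also have "sq \<dots> (w1 @ [LY \<one> (inv h \<otimes> c), LX h] @ (w2 @ rest))"
    using sq_cong[OF mv_R4one[OF v(5) c]] v r by simp
  also have "sq \<dots> (w @ LY \<one> (inv h \<otimes> c) # rest)" using sq_sym[OF F[OF ic]] .
  finally show ?thesis .
qed

lemma B_phase: assumes w: "Rich w" and r: "vw rest" and c: "c \<in> carrier G"
  shows "sq (w @ LY \<one> c # rest) (w @ LY \<one> \<one> # rest)"
proof -
  have wr: "is_x_word w" "vw w" "generate G (xs w) = carrier G" using w by (auto simp: Rich_def)
  define Q where "Q t \<longleftrightarrow> (\<forall>c\<in>carrier G. sq (w @ LY \<one> c # rest) (w @ LY \<one> (t \<otimes> c) # rest))" for t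
  have Q1: "Q \<one>" unfolding Q_def by simp
  have QS: "Q h" if h: "h \<in> xs w" for h
    unfolding Q_def
  proof
    fix c assume c: "c \<in> carrier G"
    have hc: "h \<in> carrier G" using xs_carrier[OF wr(2)] h by blast
    have "sq (w @ LY \<one> (h \<otimes> c) # rest) (w @ LY \<one> (inv h \<otimes> (h \<otimes> c)) # rest)"
      using B_move[OF wr(1,2) h r, of "h \<otimes> c"] hc c by simp
    then have "sq (w @ LY \<one> (h \<otimes> c) # rest) (w @ LY \<one> c # rest)" using hc c by simp
    then show "sq (w @ LY \<one> c # rest) (w @ LY \<one> (h \<otimes> c) # rest)" by (rule sq_sym)
  qed
  have Qm: "Q (x \<otimes> y)" if xy: "x \<in> carrier G" "y \<in> carrier G" "Q x" "Q y" for x y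
    unfolding Q_def
  proof
    fix c assume c: "c \<in> carrier G"
    have "sq (w @ LY \<one> c # rest) (w @ LY \<one> (y \<otimes> c) # rest)" using xy(4) c Q_def by blast
    also have "sq \<dots> (w @ LY \<one> (x \<otimes> (y \<otimes> c)) # rest)" using xy(3) xy c Q_def by simp
    finally show "sq (w @ LY \<one> c # rest) (w @ LY \<one> (x \<otimes> y \<otimes> c) # rest)" using xy c by (simp add: m_assoc)
  qed
  have "Q (inv c)" using gen_closed[OF xs_carrier[OF wr(2)] Q1 QS Qm] wr(3) c by simp
  then have "sq (w @ LY \<one> c # rest) (w @ LY \<one> (inv c \<otimes> c) # rest)" using c Q_def by blast
  then show ?thesis using c by simp
qed

lemma kill: assumes w: "Rich w" and ab: "a \<in> carrier G" "b \<in> carrier G" and r: "vw rest"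
  shows "\<exists>w'. Rich w' \<and> sq (w @ LY a b # rest) (w' @ LY \<one> \<one> # rest)"
proof -
  obtain w1 where w1: "Rich w1" "sq (w @ LY a b # rest) (w1 @ LY (inv a \<otimes> a) b # rest)"
    using A_gen[of "inv a"] ab w r by blast
  have "sq (w1 @ LY \<one> b # rest) (w1 @ LY \<one> \<one> # rest)" using B_phase[OF w1(1) r ab(2)] .
  then show ?thesis using w1 ab by (auto intro: sq_trans)
qed

lemma main: "Rich w \<Longrightarrow> okab ab \<Longrightarrow> \<exists>z. Rich z \<and> sq (w @ ys ab) (z @ replicate (length ab) (LY \<one> \<one>))"
proof (induction ab arbitrary: w)
  case Nil then show ?case by auto
next
  case (Cons x ab)
  obtain a b where x: "x = (a,b)" by fastforce
  have ok: "a \<in> carrier G" "b \<in> carrier G" "okab ab" using Cons.prems x by auto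
  have vr: "vw (ys ab)" using okab_vw[OF ok(3)] .
  obtain w' where w': "Rich w'" "sq (w @ LY a b # ys ab) (w' @ LY \<one> \<one> # ys ab)"
    using kill[OF Cons.prems(1) ok(1,2) vr] by blast
  have w'r: "is_x_word w'" "vw w'" using w'(1) by (auto simp: Rich_def)
  obtain z where z: "Rich z" "sq (w' @ ys ab) (z @ replicate (length ab) (LY \<one> \<one>))"
    using Cons.IH[OF w'(1) ok(3)] by blast
  have zr: "is_x_word z" "vw z" using z(1) by (auto simp: Rich_def)
  let ?R = "replicate (length ab) (LY \<one> \<one>)"
  have vR: "vw ?R" by simp
  have "sq (w @ ys (x # ab)) (w' @ LY \<one> \<one> # ys ab)" using w'(2) x by simp
  also have "w' @ LY \<one> \<one> # ys ab = (w' @ [LY \<one> \<one>]) @ ys ab" by simp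
  also have "sq \<dots> (([LY \<one> \<one>] @ w') @ ys ab)" using sq_congR[OF free11[OF w'r] vr] .
  also have "\<dots> = [LY \<one> \<one>] @ (w' @ ys ab)" by simp
  also have "sq \<dots> ([LY \<one> \<one>] @ (z @ ?R))" using sq_congL[OF z(2), of "[LY \<one> \<one>]"] by simp
  also have "\<dots> = ([LY \<one> \<one>] @ z) @ ?R" by simp
  also have "sq \<dots> ((z @ [LY \<one> \<one>]) @ ?R)" using sq_congR[OF sq_sym[OF free11[OF zr]] vR] .
  also have "\<dots> = z @ replicate (length (x # ab)) (LY \<one> \<one>)" by (simp add: replicate_append_same)
  finally show ?case using z(1) by blast
qed

end


context eqctx begin

lemma enrich_aux: "\<forall>w. card (carrier G) - card (generate G (xs w)) = n \<longrightarrow> is_x_word w \<longrightarrow> vw w \<longrightarrow> TC w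
  \<longrightarrow> okab ab \<longrightarrow> generate G (xs w \<union> fst ` set ab \<union> snd ` set ab) = carrier G
  \<longrightarrow> (\<exists>w'. Rich w' \<and> sq (w @ ys ab) (w' @ ys ab))"
proof (induction n rule: less_induct)
  case (less n)
  show ?case
  proof (intro allI impI)
    fix w assume n: "card (carrier G) - card (generate G (xs w)) = n" and w: "is_x_word w" "vw w" "TC w" "okab ab"
      and ge: "generate G (xs w \<union> fst ` set ab \<union> snd ` set ab) = carrier G"
    show "\<exists>w'. Rich w' \<and> sq (w @ ys ab) (w' @ ys ab)"
    proof (cases "generate G (xs w) = carrier G")
      case True
      then have "Rich w" unfolding Rich_def using w by blast
      then show ?thesis by (intro exI[of _ w]) simp
    next
      case False
      have sc: "xs w \<subseteq> carrier G" using xs_carrier[OF w(2)] .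
      have sub: "generate G (xs w) \<subseteq> carrier G" using generate_incl[OF sc] .
      have "\<not> Os \<subseteq> generate G (xs w)"
      proof
        assume "Os \<subseteq> generate G (xs w)"
        then have "generate G Os \<subseteq> generate G (xs w)"
          by (rule generate_subgroup_incl[OF _ generate_is_subgroup[OF sc]])
        then show False using False sub gen by simp
      qed
      then obtain h where h: "h \<in> Os" "h \<notin> generate G (xs w)" by blast
      obtain C where C: "C \<in> set Cs" "h \<in> C" using in_Os[OF h(1)] by blast
      obtain u g p where up: "g \<in> C" "p \<ge> 1" "g [^] p = \<one>" "is_x_word u" "vw u" "g \<in> xs u"
        "sq w (u @ rep p g)" "sametau (u @ rep p g) w" "xs w \<subseteq> generate G (xs u)"
        using prepare[OF w(1,2,3) C(1)] by blast
      have gO: "g \<in> Os" using class_Os[OF C(1) up(1)] .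
      have abc: "fst ` set ab \<union> snd ` set ab \<subseteq> carrier G" using w(4) by (force simp: okab_def)
      have uc: "xs u \<union> fst ` set ab \<union> snd ` set ab \<subseteq> carrier G" using xs_carrier[OF up(5)] abc by blast
      have gu: "generate G (xs u \<union> fst ` set ab \<union> snd ` set ab) = carrier G"
      proof
        show "generate G (xs u \<union> fst ` set ab \<union> snd ` set ab) \<subseteq> carrier G" using generate_incl[OF uc] .
        have "xs w \<union> fst ` set ab \<union> snd ` set ab \<subseteq> generate G (xs u \<union> fst ` set ab \<union> snd ` set ab)"
        proof -
          have "generate G (xs u) \<subseteq> generate G (xs u \<union> fst ` set ab \<union> snd ` set ab)"
            by (rule mono_generate) blast
          then show ?thesis using up(9) by (auto intro: generate.incl)
        qed
        then have "generate G (xs w \<union> fst ` set ab \<union> snd ` set ab) \<subseteq> generate G (xs u \<union> fst ` set ab \<union> snd ` set ab)"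
          by (rule generate_subgroup_incl[OF _ generate_is_subgroup[OF uc]])
        then show "carrier G \<subseteq> generate G (xs u \<union> fst ` set ab \<union> snd ` set ab)" using ge by simp
      qed
      obtain t where t: "t \<in> carrier G" "h = gconj G g t" using class_conj_ex[OF C(1) up(1) C(2)] by blast
      have tg: "t \<in> generate G (xs u \<union> fst ` set ab \<union> snd ` set ab)" using t gu by simp
      have sq1: "sq (u @ rep p g @ ys ab @ []) (u @ rep p h @ ys ab @ [])"
        using BC[OF up(4,5) w(4) vw_simps(1) tg gO up(3)] t by simp
      define wn where "wn = u @ rep p h"
      have wn: "is_x_word wn" "vw wn" using up(4,5) h(1) by (simp_all add: wn_def)
      have stn: "sametau wn w"
      proof -
        have "sametau wn (u @ rep p g)" unfolding wn_def
          using sametau_app[OF sametau_refl sametau_rep_conj[of g t p]] t gO by simp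
        also have "sametau (u @ rep p g) w" using up(8) .
        finally show ?thesis .
      qed
      have tcn: "TC wn" using TC_sametau[OF stn w(3)] .
      have xun: "xs u \<subseteq> xs wn" by (simp add: wn_def)
      have hx: "h \<in> xs wn" using up(2) by (simp add: wn_def)
      have wnc: "xs wn \<subseteq> carrier G" using xs_carrier[OF wn(2)] .
      have gen_n: "generate G (xs wn \<union> fst ` set ab \<union> snd ` set ab) = carrier G"
      proof
        show "generate G (xs wn \<union> fst ` set ab \<union> snd ` set ab) \<subseteq> carrier G"
          using generate_incl wnc abc by (metis Un_subset_iff)
        have "generate G (xs u \<union> fst ` set ab \<union> snd ` set ab) \<subseteq> generate G (xs wn \<union> fst ` set ab \<union> snd ` set ab)"
          by (rule mono_generate) (use xun in blast)
        then show "carrier G \<subseteq> generate G (xs wn \<union> fst ` set ab \<union> snd ` set ab)" using gu by simp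
      qed
      have ps: "generate G (xs w) \<subset> generate G (xs wn)"
      proof
        have "generate G (xs u) \<subseteq> generate G (xs wn)" by (rule mono_generate[OF xun])
        then have "xs w \<subseteq> generate G (xs wn)" using up(9) by blast
        then show "generate G (xs w) \<subseteq> generate G (xs wn)"
          by (rule generate_subgroup_incl[OF _ generate_is_subgroup[OF wnc]])
        show "generate G (xs w) \<noteq> generate G (xs wn)" using h(2) hx generate.incl[of h "xs wn" G] by blast
      qed
      have fn: "finite (generate G (xs wn))" using generate_incl[OF wnc] fin finite_subset by blast
      have c1: "card (generate G (xs w)) < card (generate G (xs wn))" using psubset_card_mono[OF fn ps] .
      have c2: "card (generate G (xs wn)) \<le> card (carrier G)" using card_mono[OF fin generate_incl[OF wnc]] .
      have lt: "card (carrier G) - card (generate G (xs wn)) < n" using n c1 c2 by linarith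
      obtain w'' where w'': "Rich w''" "sq (wn @ ys ab) (w'' @ ys ab)"
        using less.IH[OF lt] wn tcn w(4) gen_n by blast
      have "sq (w @ ys ab) ((u @ rep p g) @ ys ab)" using sq_congR[OF up(7) okab_vw[OF w(4)]] .
      also have "sq \<dots> (wn @ ys ab)" using sq1 by (simp add: wn_def)
      also have "sq \<dots> (w'' @ ys ab)" using w''(2) .
      finally show ?thesis using w''(1) by blast
    qed
  qed
qed

end

lemma elems_x: "is_x_word w \<Longrightarrow> (\<Union>l\<in>set w. letter_elems l) = {k. LX k \<in> set w}"
  by (induction w) (auto simp: is_x_word_def)
lemma elems_y: "(\<Union>l\<in>set (map (\<lambda>(a,b). LY a b) ab). letter_elems l) = fst ` set ab \<union> snd ` set ab"
  by (induction ab) auto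

theorem proposition5:
  fixes G :: "'a monoid" and Cs :: "'a set list"
    and s1 :: "'a letter list" and ab :: "('a \<times> 'a) list"
  assumes "equipped G Cs"
    and "finite (carrier G)"
    and "generate G (\<Union>(set Cs)) = carrier G"
    and "s1 \<noteq> []" and "is_x_word s1" and "valid_word G (\<Union>(set Cs)) s1"
    and "\<forall>i<length Cs. \<forall>g\<in>Cs!i. tau (Cs!i) s1 > card (Cs!i) * group.ord G g"
    and "\<forall>(a,b)\<in>set ab. a \<in> carrier G \<and> b \<in> carrier G"
    and "G_sub G (s1 @ map (\<lambda>(a,b). LY a b) ab) = carrier G"
  shows "\<exists>z. z \<noteq> [] \<and> is_x_word z \<and> valid_word G (\<Union>(set Cs)) z \<and>
           sgeq G (\<Union>(set Cs)) (s1 @ map (\<lambda>(a,b). LY a b) ab)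
                (z @ replicate (length ab) (LY \<one>\<^bsub>G\<^esub> \<one>\<^bsub>G\<^esub>))"
proof -
  have grp: "group G" using assms(1) by (simp add: equipped_def)
  have "eqctx G Cs" unfolding eqctx_def eqctx_axioms_def using grp assms(1,2,3) by blast
  then interpret E: eqctx G Cs .
  have tc: "E.TC s1" unfolding E.TC_def
  proof (intro ballI)
    fix C g assume C: "C \<in> set Cs" and g: "g \<in> C"
    obtain i where i: "i < length Cs" "C = Cs ! i" using C by (auto simp: in_set_conv_nth)
    show "card C * E.ord g < tau C s1" using assms(7) i g by blast
  qed
  have ok: "E.okab ab" using assms(8) by (simp add: E.okab_def)
  have ge: "generate G (E.xs s1 \<union> fst ` set ab \<union> snd ` set ab) = carrier G"
  proof -
    have "(\<Union>l\<in>set (s1 @ map (\<lambda>(a,b). LY a b) ab). letter_elems l) = E.xs s1 \<union> fst ` set ab \<union> snd ` set ab"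
      using elems_x[OF assms(5)] elems_y[of ab] by (auto simp: E.xs_def)
    then show ?thesis using assms(9) by (simp add: G_sub_def)
  qed
  obtain w where w: "E.Rich w" "sgeq G (\<Union>(set Cs)) (s1 @ map (\<lambda>(a,b). LY a b) ab) (w @ map (\<lambda>(a,b). LY a b) ab)"
    using E.enrich_aux[of _ ab] assms(5,6) tc ok ge by blast
  obtain z where z: "E.Rich z" "sgeq G (\<Union>(set Cs)) (w @ map (\<lambda>(a,b). LY a b) ab) (z @ replicate (length ab) (LY \<one>\<^bsub>G\<^esub> \<one>\<^bsub>G\<^esub>))"
    using E.main[OF w(1) ok] by blast
  have Cs: "Cs \<noteq> []"
  proof
    assume "Cs = []"
    then show False using assms(4,5,6) by (cases s1) (auto simp: is_x_word_def valid_word_def valid_letter_def)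
  qed
  have zne: "z \<noteq> []"
  proof
    assume zn: "z = []"
    have C: "hd Cs \<in> set Cs" using Cs by simp
    obtain g where g: "g \<in> hd Cs" using E.class_ne[OF C] by blast
    have "card (hd Cs) * E.ord g < tau (hd Cs) z" using z(1) C g by (simp add: E.Rich_def E.TC_def)
    then show False using zn by (simp add: tau_def)
  qed
  show ?thesis using zne z w by (auto simp: E.Rich_def intro: E.sq_trans)
qed



end
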